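(* Let $q$ be a prime with $q \equiv 3 \pmod 4$ and define $\phi:\mathbb{F}_q \to SO(2,q)\setminus\{I\}$ by $$\phi(r) = \begin{pmatrix} \frac{r^2-1}{r^2+1} & \frac{-2r}{r^2+1} \\ \frac{2r}{r^2+1} & \frac{r^2-1}{r^2+1}\end{pmatrix}.$$ For $x,y \in \mathbb{F}_q^2$, the set $l_{x\to y} = \{(p,r) \in \mathbb{F}_q^2\times\mathbb{F}_q : f_{p,\phi(r)}(x) = y\}$ is an (affine) line in $\mathbb{F}_q^3$.
   Context: $SO(2,q) = \{A \in \mathrm{Mat}_2(\mathbb{F}_q) : A^TA = I, \det A = 1\}$; since $-1$ is not a square in $\mathbb{F}_q$, $r^2+1 \neq 0$ for all $r$, so $\phi$ is well defined. For $p \in \mathbb{F}_q^2$ and $\theta \in SO(2,q)$, $f_{p,\theta}(x) = \theta(x-p)+p$. Points $(p,r)$ with $p \in \mathbb{F}_q^2$, $r\in\mathbb{F}_q$ are identified with points of $\mathbb{F}_q^3$. *)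

theory Defs
  imports "HOL-Library.Cardinality" "HOL-Computational_Algebra.Primes"
begin

text \<open>The field F_q is modelled as a finite field type 'a with CARD('a) = q.
  Points of F_q^2 are pairs; 2x2 matrices are pairs of rows;
  points (p,r) of F_q^2 x F_q are identified with points of F_q^3.\<close>

type_synonym 'a mat2 = "('a \<times> 'a) \<times> ('a \<times> 'a)"

definition mat_app :: "'a::comm_ring_1 mat2 \<Rightarrow> 'a \<times> 'a \<Rightarrow> 'a \<times> 'a" where
  "mat_app M v = (fst (fst M) * fst v + snd (fst M) * snd v,
                  fst (snd M) * fst v + snd (snd M) * snd v)"

definition SO2 :: "'a::comm_ring_1 mat2 set" where
  "SO2 = {M. let a = fst (fst M); b = snd (fst M); c = fst (snd M); d = snd (snd M) in
             a*a + c*c = 1 \<and> a*b + c*d = 0 \<and> b*b + d*d = 1 \<and> a*d - b*c = 1}"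

definition phi :: "'a::field \<Rightarrow> 'a mat2" where
  "phi r = (((r^2 - 1) / (r^2 + 1), (- 2 * r) / (r^2 + 1)),
            ((2 * r) / (r^2 + 1), (r^2 - 1) / (r^2 + 1)))"

text \<open>f_{p,theta}(x) = theta(x - p) + p\<close>
definition rot_about :: "'a::comm_ring_1 \<times> 'a \<Rightarrow> 'a mat2 \<Rightarrow> 'a \<times> 'a \<Rightarrow> 'a \<times> 'a" where
  "rot_about p \<theta> x =
     (let w = mat_app \<theta> (fst x - fst p, snd x - snd p) in (fst w + fst p, snd w + snd p))"

definition l_to :: "'a::field \<times> 'a \<Rightarrow> 'a \<times> 'a \<Rightarrow> (('a \<times> 'a) \<times> 'a) set" where
  "l_to x y = {(p, r). rot_about p (phi r) x = y}"

definition affine_line3 :: "(('a::field \<times> 'a) \<times> 'a) set \<Rightarrow> bool" where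
  "affine_line3 L \<longleftrightarrow> (\<exists>a1 a2 a3 v1 v2 v3. (v1, v2, v3) \<noteq> (0, 0, 0) \<and>
      L = {((a1 + t * v1, a2 + t * v2), a3 + t * v3) | t. True})"

end

theory Submission
  imports Defs "HOL-Number_Theory.Residues"
begin

lemma fermat_field:
  fixes r :: "'a::{field,finite}"
  assumes "r \<noteq> 0"
  shows "r ^ (CARD('a) - 1) = 1"
proof -
  define S where "S = (UNIV :: 'a set) - {0}"
  have inj: "inj_on (\<lambda>x. r * x) S" using assms by (auto simp: inj_on_def)
  have img: "(\<lambda>x. r * x) ` S = S"
  proof
    show "(\<lambda>x. r * x) ` S \<subseteq> S" using assms by (auto simp: S_def)
    show "S \<subseteq> (\<lambda>x. r * x) ` S"
    proof
      fix y assume "y \<in> S"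
      then have "y = r * (y / r)" "y / r \<in> S" using assms by (auto simp: S_def)
      then show "y \<in> (\<lambda>x. r * x) ` S" by blast
    qed
  qed
  have "prod (\<lambda>x. r * x) S = prod id S"
    using prod.reindex[OF inj, of id] img by simp
  moreover have "prod (\<lambda>x. r * x) S = r ^ card S * prod id S"
    by (simp add: prod.distrib)
  moreover have "prod id S \<noteq> 0" by (simp add: S_def)
  moreover have "card S = CARD('a) - 1" by (simp add: S_def card_Diff_singleton)
  ultimately show ?thesis by (metis mult_cancel_right2)
qed

lemma two_ne:
  assumes "CARD('a::{field,finite}) mod 4 = 3"
  shows "(2::'a) \<noteq> 0"
proof
  assume "(2::'a) = 0"
  then have "of_nat 2 = (0::'a)" by simp
  then have "CHAR('a) dvd 2" by (simp only: of_nat_eq_0_iff_char_dvd)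
  moreover have "CHAR('a) \<noteq> 1" by simp
  moreover have "CHAR('a) \<noteq> 0"
    by (simp add: finite_imp_CHAR_pos)
  moreover have "CHAR('a) \<le> 2" using calculation(1) by (simp add: dvd_imp_le)
  ultimately have "CHAR('a) = 2" by linarith
  then have "2 dvd CARD('a)" using CHAR_dvd_CARD[where 'a='a] by simp
  with assms show False by presburger
qed

lemma sq_ne:
  fixes r :: "'a::{field,finite}"
  assumes "CARD('a) mod 4 = 3"
  shows "r^2 + 1 \<noteq> 0"
proof
  assume h: "r^2 + 1 = 0"
  then have r2: "r^2 = -1" by (simp add: eq_neg_iff_add_eq_0)
  then have "r \<noteq> 0" by auto
  define k where "k = CARD('a) div 4"
  have k: "CARD('a) - 1 = 4 * k + 2" using assms unfolding k_def by presburger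
  have "r ^ (CARD('a) - 1) = r^(2*(2*k)) * r^2"
    unfolding k by (simp add: power_add power2_eq_square)
  also have "\<dots> = (r^2)^(2*k) * r^2" by (simp only: power_mult)
  also have "\<dots> = -1" using r2 by (simp add: power_mult)
  finally have "(-1::'a) = 1" using fermat_field[OF \<open>r \<noteq> 0\<close>] by simp
  then have "(2::'a) = 0" by (metis add.inverse_inverse one_add_one add.right_inverse)
  with two_ne[OF assms] show False by simp
qed

lemma comb:
  fixes s :: "'a::field"
  assumes "s \<noteq> 0"
  shows "A/s*u + B/s*w + p = (A*u + B*w + s*p)/s"
proof -
  have "A/s*u + B/s*w + p = (A*u)/s + (B*w)/s + (s*p)/s" using assms by simp
  also have "\<dots> = (A*u + B*w + s*p)/s" by (simp add: add_divide_distrib)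
  finally show ?thesis .
qed

theorem lemma2p2:
  fixes x y :: "'a::{field,finite} \<times> 'a"
  assumes "prime (CARD('a))" and "CARD('a) mod 4 = 3"
  shows "affine_line3 (l_to x y)"
proof -
  obtain x1 x2 where x: "x = (x1, x2)" by (cases x)
  obtain y1 y2 where y: "y = (y1, y2)" by (cases y)
  have two: "(2::'a) \<noteq> 0" using two_ne[OF assms(2)] .
  define a1 where "a1 = (x1 + y1) / 2"
  define a2 where "a2 = (x2 + y2) / 2"
  define v1 where "v1 = - (y2 - x2) / 2"
  define v2 where "v2 = (y1 - x1) / 2"
  have key: "rot_about (p1, p2) (phi r) (x1, x2) = (y1, y2) \<longleftrightarrow>
      p1 = a1 + r * v1 \<and> p2 = a2 + r * v2" for p1 p2 r :: 'a
  proof -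
    have s: "r^2 + 1 \<noteq> 0" using sq_ne[OF assms(2)] .
    have c1: "(r^2-1)/(r^2+1)*(x1-p1) + (-2*r)/(r^2+1)*(x2-p2) + p1 = y1 \<longleftrightarrow>
       2*p1 + 2*r*p2 = (r^2+1)*y1 - (r^2-1)*x1 + 2*r*x2"
    proof -
      have "(r^2-1)/(r^2+1)*(x1-p1) + (-2*r)/(r^2+1)*(x2-p2) + p1
          = ((r^2-1)*(x1-p1) + (-2*r)*(x2-p2) + (r^2+1)*p1)/(r^2+1)"
        using s by (rule comb)
      then have "(r^2-1)/(r^2+1)*(x1-p1) + (-2*r)/(r^2+1)*(x2-p2) + p1 = y1 \<longleftrightarrow>
          (r^2-1)*(x1-p1) + (-2*r)*(x2-p2) + (r^2+1)*p1 = y1 * (r^2+1)"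
        using s by (simp add: divide_eq_eq)
      also have "\<dots> \<longleftrightarrow> 2*p1 + 2*r*p2 = (r^2+1)*y1 - (r^2-1)*x1 + 2*r*x2"
        by (auto simp: algebra_simps)
      finally show ?thesis .
    qed
    have c2: "(2*r)/(r^2+1)*(x1-p1) + (r^2-1)/(r^2+1)*(x2-p2) + p2 = y2 \<longleftrightarrow>
       -2*r*p1 + 2*p2 = (r^2+1)*y2 - 2*r*x1 - (r^2-1)*x2"
    proof -
      have "(2*r)/(r^2+1)*(x1-p1) + (r^2-1)/(r^2+1)*(x2-p2) + p2
          = ((2*r)*(x1-p1) + (r^2-1)*(x2-p2) + (r^2+1)*p2)/(r^2+1)"
        using s by (rule comb)
      then have "(2*r)/(r^2+1)*(x1-p1) + (r^2-1)/(r^2+1)*(x2-p2) + p2 = y2 \<longleftrightarrow>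
          (2*r)*(x1-p1) + (r^2-1)*(x2-p2) + (r^2+1)*p2 = y2 * (r^2+1)"
        using s by (simp add: divide_eq_eq)
      also have "\<dots> \<longleftrightarrow> -2*r*p1 + 2*p2 = (r^2+1)*y2 - 2*r*x1 - (r^2-1)*x2"
        by (auto simp: algebra_simps)
      finally show ?thesis .
    qed
    have "rot_about (p1, p2) (phi r) (x1, x2) = (y1, y2) \<longleftrightarrow>
       (2*p1 + 2*r*p2 = (r^2+1)*y1 - (r^2-1)*x1 + 2*r*x2 \<and>
        -2*r*p1 + 2*p2 = (r^2+1)*y2 - 2*r*x1 - (r^2-1)*x2)"
      using c1 c2 by (simp add: rot_about_def phi_def mat_app_def Let_def)
    also have "\<dots> \<longleftrightarrow> p1 = a1 + r * v1 \<and> p2 = a2 + r * v2"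
    proof
      assume h: "2*p1 + 2*r*p2 = (r^2+1)*y1 - (r^2-1)*x1 + 2*r*x2 \<and>
        -2*r*p1 + 2*p2 = (r^2+1)*y2 - 2*r*x1 - (r^2-1)*x2"
      have ha1: "2*a1 = x1+y1" "2*a2 = x2+y2" "2*v1 = -(y2-x2)" "2*v2 = y1-x1"
        using two unfolding a1_def a2_def v1_def v2_def by simp_all
      have L1: "4*(r^2+1)*p1 = 2*(2*p1 + 2*r*p2) - 2*r*(-2*r*p1 + 2*p2)"
        by (simp add: algebra_simps power2_eq_square)
      have L2: "4*(r^2+1)*p2 = 2*r*(2*p1 + 2*r*p2) + 2*(-2*r*p1 + 2*p2)"
        by (simp add: algebra_simps power2_eq_square)
      have R1: "2*((r^2+1)*y1 - (r^2-1)*x1 + 2*r*x2) - 2*r*((r^2+1)*y2 - 2*r*x1 - (r^2-1)*x2)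
          = 4*(r^2+1)*(a1 + r*v1)"
      proof -
        have "4*(r^2+1)*(a1 + r*v1) = 2*(r^2+1)*(2*a1) + 2*r*(r^2+1)*(2*v1)"
          by (simp add: algebra_simps)
        also have "\<dots> = 2*(r^2+1)*(x1+y1) + 2*r*(r^2+1)*(-(y2-x2))" by (simp only: ha1)
        finally show ?thesis by (simp add: algebra_simps power2_eq_square)
      qed
      have R2: "2*r*((r^2+1)*y1 - (r^2-1)*x1 + 2*r*x2) + 2*((r^2+1)*y2 - 2*r*x1 - (r^2-1)*x2)
          = 4*(r^2+1)*(a2 + r*v2)"
      proof -
        have "4*(r^2+1)*(a2 + r*v2) = 2*(r^2+1)*(2*a2) + 2*r*(r^2+1)*(2*v2)"
          by (simp add: algebra_simps)
        also have "\<dots> = 2*(r^2+1)*(x2+y2) + 2*r*(r^2+1)*(y1-x1)" by (simp only: ha1)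
        finally show ?thesis by (simp add: algebra_simps power2_eq_square)
      qed
      have e1: "4*(r^2+1)*p1 = 4*(r^2+1)*(a1 + r*v1)" using L1 R1 h by (metis (no_types, lifting))
      have e2: "4*(r^2+1)*p2 = 4*(r^2+1)*(a2 + r*v2)" proof -
        from h have "2*p1 + 2*r*p2 = (r^2+1)*y1 - (r^2-1)*x1 + 2*r*x2"
          and "-2*r*p1 + 2*p2 = (r^2+1)*y2 - 2*r*x1 - (r^2-1)*x2" by auto
        then show ?thesis using L2 R2 by argo
      qed
      have four: "(4::'a) \<noteq> 0" using two by (metis mult_eq_0_iff numeral_Bit0 one_add_one mult_2)
      show "p1 = a1 + r * v1 \<and> p2 = a2 + r * v2" 
      proof -
        have "4*(r^2+1) \<noteq> (0::'a)" using s four by (simp only: mult_eq_0_iff) simp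
        then show ?thesis using e1 e2 by (metis mult_left_cancel)
      qed
    next
      assume hp: "p1 = a1 + r * v1 \<and> p2 = a2 + r * v2"
      have ha1: "2*a1 = x1+y1" "2*a2 = x2+y2" "2*v1 = -(y2-x2)" "2*v2 = y1-x1"
        using two unfolding a1_def a2_def v1_def v2_def by simp_all
      have "2*p1 = 2*a1 + r*(2*v1)" "2*p2 = 2*a2 + r*(2*v2)" using hp by (simp_all add: algebra_simps)
      then have q0: "2*p1 = (x1+y1) + r*(-(y2-x2))" "2*p2 = (x2+y2) + r*(y1-x1)" by (simp_all only: ha1)
      have q: "2*p1 = x1+y1 - r*(y2-x2)" "2*p2 = x2+y2 + r*(y1-x1)" using q0 by (simp_all add: right_diff_distrib)
      show "2*p1 + 2*r*p2 = (r^2+1)*y1 - (r^2-1)*x1 + 2*r*x2 \<and>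
        -2*r*p1 + 2*p2 = (r^2+1)*y2 - 2*r*x1 - (r^2-1)*x2"
      proof
        have "2*p1 + 2*r*p2 = 2*p1 + r*(2*p2)" by (simp add: ac_simps)
        also have "\<dots> = (x1+y1 - r*(y2-x2)) + r*(x2+y2 + r*(y1-x1))" by (simp only: q)
        also have "\<dots> = (r^2+1)*y1 - (r^2-1)*x1 + 2*r*x2" by (simp add: algebra_simps power2_eq_square)
        finally show "2*p1 + 2*r*p2 = (r^2+1)*y1 - (r^2-1)*x1 + 2*r*x2" .
        have "-2*r*p1 + 2*p2 = -r*(2*p1) + (2*p2)" by (simp add: ac_simps)
        also have "\<dots> = -r*(x1+y1 - r*(y2-x2)) + (x2+y2 + r*(y1-x1))" by (simp only: q)
        also have "\<dots> = (r^2+1)*y2 - 2*r*x1 - (r^2-1)*x2" by (simp add: algebra_simps power2_eq_square)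
        finally show "-2*r*p1 + 2*p2 = (r^2+1)*y2 - 2*r*x1 - (r^2-1)*x2" .
      qed
    qed
    finally show ?thesis .
  qed
  have L: "l_to x y = {((a1 + t * v1, a2 + t * v2), 0 + t * 1) | t. True}"
  proof (rule Set.set_eqI)
    fix z :: "('a \<times> 'a) \<times> 'a"
    obtain p1 p2 r where z: "z = ((p1, p2), r)" by (metis prod.collapse)
    show "z \<in> l_to x y \<longleftrightarrow> z \<in> {((a1 + t * v1, a2 + t * v2), 0 + t * 1) | t. True}"
      unfolding z l_to_def x y using key[of p1 p2 r] by auto
  qed
  have ne: "(v1, v2, 1::'a) \<noteq> (0, 0, 0)" by simp
  show ?thesis unfolding affine_line3_def using L ne by blast
qed

end
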